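(* Let $T$ be a tree on $n\ge 2$ vertices. Then ${\rm mvr}(\overline{T})=2$ if $T=K_{1,n-1}$ (a star), and ${\rm mvr}(\overline{T})=3$ otherwise.
   Context: All graphs are finite and simple; $\overline{G}$ denotes the complement of $G$. An orthogonal vector representation of a graph $G=(V,E)$ in $\mathbb{R}^d$ is a map $\phi:V\to\mathbb{R}^d$ with $\phi(v)\neq 0$ for all $v$, and for distinct $u,v$: $\langle\phi(u),\phi(v)\rangle=0$ if and only if $uv\notin E$. ${\rm mvr}(G)$ is the smallest $d$ for which such a representation exists. *)

theory Defs
  imports Complex_Main
begin

definition simple_graph :: "'a set \<Rightarrow> ('a \<Rightarrow> 'a \<Rightarrow> bool) \<Rightarrow> bool" where
  "simple_graph V E \<longleftrightarrow> finite V \<and> (\<forall>u v. E u v \<longrightarrow> u \<in> V \<and> v \<in> V)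
     \<and> (\<forall>u v. E u v \<longrightarrow> E v u) \<and> (\<forall>v. \<not> E v v)"

definition complement :: "'a set \<Rightarrow> ('a \<Rightarrow> 'a \<Rightarrow> bool) \<Rightarrow> 'a \<Rightarrow> 'a \<Rightarrow> bool" where
  "complement V E u v \<longleftrightarrow> u \<in> V \<and> v \<in> V \<and> u \<noteq> v \<and> \<not> E u v"

definition connected_graph :: "'a set \<Rightarrow> ('a \<Rightarrow> 'a \<Rightarrow> bool) \<Rightarrow> bool" where
  "connected_graph V E \<longleftrightarrow> (\<forall>u\<in>V. \<forall>v\<in>V. E\<^sup>*\<^sup>* u v)"

definition is_cycle :: "('a \<Rightarrow> 'a \<Rightarrow> bool) \<Rightarrow> 'a list \<Rightarrow> bool" where
  "is_cycle E cs \<longleftrightarrow> length cs \<ge> 3 \<and> distinct cs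
     \<and> (\<forall>i. Suc i < length cs \<longrightarrow> E (cs ! i) (cs ! Suc i))
     \<and> E (last cs) (hd cs)"

definition acyclic_graph :: "('a \<Rightarrow> 'a \<Rightarrow> bool) \<Rightarrow> bool" where
  "acyclic_graph E \<longleftrightarrow> \<not> (\<exists>cs. is_cycle E cs)"

definition is_tree :: "'a set \<Rightarrow> ('a \<Rightarrow> 'a \<Rightarrow> bool) \<Rightarrow> bool" where
  "is_tree V E \<longleftrightarrow> simple_graph V E \<and> V \<noteq> {} \<and> connected_graph V E \<and> acyclic_graph E"

definition is_star :: "'a set \<Rightarrow> ('a \<Rightarrow> 'a \<Rightarrow> bool) \<Rightarrow> bool" where
  "is_star V E \<longleftrightarrow> (\<exists>c\<in>V. \<forall>u\<in>V. \<forall>v\<in>V. E u v \<longleftrightarrow> (u \<noteq> v \<and> (u = c \<or> v = c)))"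

text \<open>Vectors in R^d are represented as functions nat => real, of which only the
  coordinates 0..d-1 are used. Orthogonal vector representation of (V,E) in R^d.\<close>
definition ortho_rep :: "'a set \<Rightarrow> ('a \<Rightarrow> 'a \<Rightarrow> bool) \<Rightarrow> nat \<Rightarrow> ('a \<Rightarrow> nat \<Rightarrow> real) \<Rightarrow> bool" where
  "ortho_rep V E d \<phi> \<longleftrightarrow>
     (\<forall>v\<in>V. \<exists>i<d. \<phi> v i \<noteq> 0) \<and>
     (\<forall>u\<in>V. \<forall>v\<in>V. u \<noteq> v \<longrightarrow> ((\<Sum>i<d. \<phi> u i * \<phi> v i) = 0 \<longleftrightarrow> \<not> E u v))"

definition mvr :: "'a set \<Rightarrow> ('a \<Rightarrow> 'a \<Rightarrow> bool) \<Rightarrow> nat" where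
  "mvr V E = (LEAST d. \<exists>\<phi>. ortho_rep V E d \<phi>)"

end

theory Submission
  imports Defs "HOL-Computational_Algebra.Polynomial" "HOL-Library.Product_Plus"
begin


type_synonym v3 = "real \<times> real \<times> real"
definition dot3 :: "v3 \<Rightarrow> v3 \<Rightarrow> real" where
  "dot3 x y = fst x * fst y + fst (snd x) * fst (snd y) + snd (snd x) * snd (snd y)"
definition cross3 :: "v3 \<Rightarrow> v3 \<Rightarrow> v3" where
  "cross3 x y = (fst (snd x) * snd (snd y) - snd (snd x) * fst (snd y),
                 snd (snd x) * fst y - fst x * snd (snd y),
                 fst x * fst (snd y) - fst (snd x) * fst y)"
definition mc :: "real \<Rightarrow> v3" where "mc t = (1, t, t^2)"

lemma dot3_comm: "dot3 x y = dot3 y x" by (simp add: dot3_def mult.commute)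
lemma cross3_anti: "cross3 x y = 0 \<longleftrightarrow> cross3 y x = 0"
  by (cases x; cases y) (auto simp: cross3_def zero_prod_def mult.commute)

lemma dot3_self_zero: "dot3 x x = 0 \<longleftrightarrow> x = 0"
proof (cases x)
  case (fields a b c)
  have "a*a + b*b + c*c = 0 \<longleftrightarrow> a = 0 \<and> b = 0 \<and> c = 0"
  proof
    assume h: "a*a + b*b + c*c = 0"
    have "a*a \<ge> 0" "b*b \<ge> 0" "c*c \<ge> 0" by simp_all
    hence "a*a = 0" "b*b = 0" "c*c = 0" using h by linarith+
    thus "a = 0 \<and> b = 0 \<and> c = 0" by simp
  qed simp
  then show ?thesis using fields by (auto simp: dot3_def zero_prod_def)
qed

lemma poly_avoid:
  assumes "finite C" "\<forall>c\<in>C. c \<noteq> 0"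
  shows "\<exists>t. \<forall>c\<in>C. dot3 (mc t) c \<noteq> 0"
proof -
  have fin: "finite {t. dot3 (mc t) c = 0}" if "c \<in> C" for c
  proof -
    obtain a b d where c: "c = (a,b,d)" by (cases c)
    have "[:a,b,d:] \<noteq> 0" using assms(2) that c by (auto simp: zero_prod_def)
    hence "finite {t. poly [:a,b,d:] t = 0}" by (rule poly_roots_finite)
    moreover have "poly [:a,b,d:] t = dot3 (mc t) c" for t
      by (simp add: c dot3_def mc_def power2_eq_square algebra_simps)
    ultimately show ?thesis by simp
  qed
  have "finite (\<Union>c\<in>C. {t. dot3 (mc t) c = 0})" using fin assms(1) by blast
  then obtain t where "t \<notin> (\<Union>c\<in>C. {t. dot3 (mc t) c = 0})"
    using ex_new_if_finite[OF infinite_UNIV_char_0] by blast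
  thus ?thesis by auto
qed

lemma orth_exists: "u \<noteq> 0 \<Longrightarrow> \<exists>c. c \<noteq> 0 \<and> dot3 c u = 0"
proof -
  assume u: "u \<noteq> 0"
  obtain a b d where ud: "u = (a,b,d)" by (cases u)
  show ?thesis
  proof (cases "a = 0 \<and> b = 0")
    case True thus ?thesis by (intro exI[of _ "(1,0,0)"]) (auto simp: ud dot3_def zero_prod_def)
  next
    case False thus ?thesis by (intro exI[of _ "(-b,a,0)"]) (auto simp: ud dot3_def zero_prod_def)
  qed
qed

lemma par_dot:
  assumes "u \<noteq> 0" "cross3 u x = 0" "dot3 c u = 0"
  shows "dot3 x c = 0"
proof -
  obtain u1 u2 u3 where u: "u = (u1,u2,u3)" by (cases u)
  obtain x1 x2 x3 where x: "x = (x1,x2,x3)" by (cases x)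
  obtain c1 c2 c3 where c: "c = (c1,c2,c3)" by (cases c)
  have e: "u2*x3 - u3*x2 = 0" "u3*x1 - u1*x3 = 0" "u1*x2 - u2*x1 = 0" "c1*u1+c2*u2+c3*u3 = 0"
    using assms(2,3) by (auto simp: u x c cross3_def dot3_def zero_prod_def)
  have "(u1*u1+u2*u2+u3*u3) * (x1*c1+x2*c2+x3*c3) = (c1*u1+c2*u2+c3*u3)*(u1*x1+u2*x2+u3*x3)
     - c1*(u2*(u1*x2 - u2*x1) - u3*(u3*x1 - u1*x3)) - c2*(u3*(u2*x3 - u3*x2) - u1*(u1*x2 - u2*x1))
     - c3*(u1*(u3*x1 - u1*x3) - u2*(u2*x3 - u3*x2))"
    by (simp add: algebra_simps)
  hence "(u1*u1+u2*u2+u3*u3) * (x1*c1+x2*c2+x3*c3) = 0" using e by simp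
  moreover have "u1*u1+u2*u2+u3*u3 \<noteq> 0" using assms(1) dot3_self_zero[of u] by (simp add: u dot3_def)
  ultimately show ?thesis by (simp add: x c dot3_def)
qed

lemma triple1: "dot3 (cross3 a m) a = 0"
  by (simp add: dot3_def cross3_def algebra_simps)
lemma triple2: "dot3 (cross3 a m) s = dot3 m (cross3 s a)"
  by (simp add: dot3_def cross3_def algebra_simps)
lemma bac: "dot3 (cross3 (cross3 a m) s) c = dot3 m c * dot3 a s - dot3 a c * dot3 m s"
  by (simp add: dot3_def cross3_def algebra_simps)

lemma extend:
  assumes "finite S" "a \<noteq> 0" "\<forall>s\<in>S. s \<noteq> 0 \<and> cross3 a s \<noteq> 0"
  shows "\<exists>w. w \<noteq> 0 \<and> dot3 w a = 0 \<and> cross3 w a \<noteq> 0 \<and> (\<forall>s\<in>S. dot3 w s \<noteq> 0 \<and> cross3 w s \<noteq> 0)"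
proof -
  obtain ca where ca: "ca \<noteq> 0" "dot3 ca a = 0" using orth_exists[OF assms(2)] by blast
  define C where "C = {ca} \<union> S \<union> (\<lambda>s. cross3 s a) ` S"
  have "finite C" using assms(1) by (simp add: C_def)
  moreover have "\<forall>c\<in>C. c \<noteq> 0" using assms(3) ca cross3_anti by (auto simp: C_def)
  ultimately obtain t where t: "\<forall>c\<in>C. dot3 (mc t) c \<noteq> 0" using poly_avoid by blast
  define m where "m = mc t"
  define w where "w = cross3 a m"
  have mca: "dot3 m ca \<noteq> 0" using t by (simp add: C_def m_def)
  have w0: "w \<noteq> 0"
  proof
    assume "w = 0"
    hence "dot3 m ca = 0" using par_dot[OF assms(2), of m ca] ca(2) by (simp add: w_def)
    thus False using mca by simp
  qed
  have wa: "dot3 w a = 0" by (simp add: w_def triple1)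
  have cwa: "cross3 w a \<noteq> 0"
  proof
    assume "cross3 w a = 0"
    hence "dot3 a a = 0" using par_dot[OF w0, of a a] wa by (simp add: dot3_comm)
    thus False using assms(2) dot3_self_zero by simp
  qed
  have "dot3 w s \<noteq> 0 \<and> cross3 w s \<noteq> 0" if s: "s \<in> S" for s
  proof
    show "dot3 w s \<noteq> 0" using t s by (simp add: C_def w_def m_def triple2)
    show "cross3 w s \<noteq> 0"
    proof
      assume h: "cross3 w s = 0"
      have "dot3 m ca * dot3 a s - dot3 a ca * dot3 m s = 0"
        using bac[of a m s ca] h by (simp add: w_def dot3_def)
      hence as: "dot3 a s = 0" using mca ca(2) by (simp add: dot3_comm)
      have "dot3 m a * dot3 a s - dot3 a a * dot3 m s = 0"
        using bac[of a m s a] h by (simp add: w_def dot3_def)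
      hence "dot3 a a * dot3 m s = 0" using as by simp
      moreover have "dot3 a a \<noteq> 0" using assms(2) dot3_self_zero by simp
      moreover have "dot3 m s \<noteq> 0" using t s by (simp add: C_def m_def)
      ultimately show False by simp
    qed
  qed
  thus ?thesis using w0 wa cwa by blast
qed

lemma fict:
  assumes "finite S" "\<forall>s\<in>S. s \<noteq> 0"
  shows "\<exists>a. a \<noteq> 0 \<and> (\<forall>s\<in>S. cross3 a s \<noteq> 0)"
proof -
  have "\<forall>s\<in>S. \<exists>c. c \<noteq> 0 \<and> dot3 c s = 0" using assms(2) orth_exists by blast
  then obtain cf where cf: "\<forall>s\<in>S. cf s \<noteq> 0 \<and> dot3 (cf s) s = 0" by metis
  obtain t where t: "\<forall>c\<in>cf ` S. dot3 (mc t) c \<noteq> 0"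
    using poly_avoid[of "cf ` S"] assms(1) cf by auto
  have "mc t \<noteq> 0" by (simp add: mc_def zero_prod_def)
  moreover have "cross3 (mc t) s \<noteq> 0" if "s \<in> S" for s
  proof
    assume "cross3 (mc t) s = 0"
    hence "cross3 s (mc t) = 0" using cross3_anti by blast
    hence "dot3 (mc t) (cf s) = 0" using par_dot[of s "mc t" "cf s"] cf that assms(2) by blast
    thus False using t that by blast
  qed
  ultimately show ?thesis by blast
qed



definition ispath :: "'a set \<Rightarrow> ('a \<Rightarrow> 'a \<Rightarrow> bool) \<Rightarrow> 'a list \<Rightarrow> bool" where
  "ispath V E xs \<longleftrightarrow> xs \<noteq> [] \<and> set xs \<subseteq> V \<and> distinct xs \<and> (\<forall>i. Suc i < length xs \<longrightarrow> E (xs!i) (xs!Suc i))"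

lemma leaf_exists:
  assumes sg: "simple_graph V E" and ac: "acyclic_graph E" and ne: "V \<noteq> {}"
  shows "\<exists>v\<in>V. \<forall>x y. E v x \<longrightarrow> E v y \<longrightarrow> x = y"
proof -
  have finV: "finite V" using sg by (simp add: simple_graph_def)
  define P where "P n \<longleftrightarrow> (\<exists>xs. ispath V E xs \<and> length xs = n)" for n
  obtain v0 where "v0 \<in> V" using ne by blast
  hence P1: "P 1" unfolding P_def ispath_def by (intro exI[of _ "[v0]"]) auto
  have bnd: "\<forall>n. P n \<longrightarrow> n \<le> card V"
  proof (intro allI impI)
    fix n assume "P n"
    then obtain xs where "ispath V E xs" "length xs = n" unfolding P_def by blast
    thus "n \<le> card V" using card_mono[OF finV, of "set xs"] distinct_card[of xs]
      by (auto simp: ispath_def)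
  qed
  obtain n where n: "P n" "\<forall>m. P m \<longrightarrow> m \<le> n" using Nat.ex_has_greatest_nat[OF P1 bnd] by blast
  then obtain xs where xs: "ispath V E xs" "length xs = n" unfolding P_def by blast
  then obtain x ys where xys: "xs = x # ys" by (cases xs) (auto simp: ispath_def)
  have key: "ys \<noteq> [] \<and> w = hd ys" if Exw: "E x w" for w
  proof -
    have wV: "w \<in> V" using Exw sg by (simp add: simple_graph_def)
    have wx: "w \<noteq> x" using Exw sg by (auto simp: simple_graph_def)
    have "w \<in> set xs"
    proof (rule ccontr)
      assume nw: "w \<notin> set xs"
      have "ispath V E (w # xs)"
        using xs(1) nw wV unfolding ispath_def
      proof (intro conjI allI impI)
        fix i assume "Suc i < length (w # xs)"
        show "E ((w # xs) ! i) ((w # xs) ! Suc i)"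
        proof (cases i)
          case 0 thus ?thesis using Exw sg xys by (auto simp: simple_graph_def)
        next
          case (Suc j) thus ?thesis using xs(1) \<open>Suc i < length (w # xs)\<close>
            by (auto simp: ispath_def)
        qed
      qed auto
      hence "P (Suc n)" unfolding P_def using xs(2) by (intro exI[of _ "w # xs"]) auto
      thus False using n(2) by fastforce
    qed
    hence "w \<in> set ys" using wx xys by auto
    then obtain j where j: "j < length ys" "ys ! j = w" by (meson in_set_conv_nth)
    show ?thesis
    proof (cases j)
      case 0 thus ?thesis using j by (cases ys) auto
    next
      case (Suc k)
      define cs where "cs = take (j+2) xs"
      have lcs: "length cs = j + 2" using j xys by (simp add: cs_def)
      have "is_cycle E cs"
        unfolding is_cycle_def
      proof (intro conjI allI impI)
        show "3 \<le> length cs" using lcs Suc by simp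
        show "distinct cs" using xs(1) by (simp add: cs_def ispath_def)
        fix i assume i: "Suc i < length cs"
        have "cs ! i = xs ! i" "cs ! Suc i = xs ! Suc i" using i lcs
          by (simp_all add: cs_def)
        moreover have "Suc i < length xs" using i lcs j xys by simp
        ultimately show "E (cs ! i) (cs ! Suc i)" using xs(1) by (simp add: ispath_def)
      next
        have "cs \<noteq> []" using lcs by auto
        hence "last cs = cs ! (length cs - 1)" by (rule last_conv_nth)
        hence "last cs = cs ! (j+1)" using lcs by simp
        also have "\<dots> = w" using j xys by (simp add: cs_def)
        finally have "last cs = w" .
        moreover have "hd cs = x" using xys by (simp add: cs_def)
        ultimately show "E (last cs) (hd cs)" using Exw sg by (simp add: simple_graph_def)
      qed
      thus ?thesis using ac by (auto simp: acyclic_graph_def)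
    qed
  qed
  have "x \<in> V" using xs(1) xys by (auto simp: ispath_def)
  moreover have "\<forall>a b. E x a \<longrightarrow> E x b \<longrightarrow> a = b" using key by blast
  ultimately show ?thesis by blast
qed

definition goodrep :: "'a set \<Rightarrow> ('a \<Rightarrow> 'a \<Rightarrow> bool) \<Rightarrow> ('a \<Rightarrow> v3) \<Rightarrow> bool" where
  "goodrep V E \<phi> \<longleftrightarrow> (\<forall>v\<in>V. \<phi> v \<noteq> 0) \<and>
     (\<forall>u\<in>V. \<forall>v\<in>V. u \<noteq> v \<longrightarrow> ((dot3 (\<phi> u) (\<phi> v) = 0 \<longleftrightarrow> E u v) \<and> cross3 (\<phi> u) (\<phi> v) \<noteq> 0))"

lemma goodrep_ext:
  assumes g: "goodrep V' E' \<phi>" and vn: "v \<notin> V'" and w0: "w \<noteq> 0"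
    and wx: "\<forall>x\<in>V'. (dot3 w (\<phi> x) = 0 \<longleftrightarrow> E v x) \<and> cross3 w (\<phi> x) \<noteq> 0"
    and EE: "\<forall>x\<in>V'. \<forall>y\<in>V'. E x y = E' x y" and sym: "\<forall>x y. E x y \<longrightarrow> E y x"
  shows "goodrep (insert v V') E (\<phi>(v := w))"
  unfolding goodrep_def
proof (intro conjI ballI impI)
  fix x assume "x \<in> insert v V'" thus "(\<phi>(v := w)) x \<noteq> 0" using g w0 by (auto simp: goodrep_def)
next
  fix x y assume x: "x \<in> insert v V'" and y: "y \<in> insert v V'" and xy: "x \<noteq> y"
  have "(dot3 ((\<phi>(v := w)) x) ((\<phi>(v := w)) y) = 0 \<longleftrightarrow> E x y) \<and> cross3 ((\<phi>(v := w)) x) ((\<phi>(v := w)) y) \<noteq> 0"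
  proof (cases "x = v")
    case True
    hence "y \<in> V'" using y xy by auto
    moreover have "(\<phi>(v := w)) x = w" "(\<phi>(v := w)) y = \<phi> y" using True \<open>y \<in> V'\<close> vn by auto
    ultimately show ?thesis using True wx by simp
  next
    case False
    hence xV: "x \<in> V'" using x by auto
    show ?thesis
    proof (cases "y = v")
      case True
      have "(dot3 w (\<phi> x) = 0 \<longleftrightarrow> E v x) \<and> cross3 w (\<phi> x) \<noteq> 0" using wx xV by blast
      moreover have "(\<phi>(v := w)) x = \<phi> x" "(\<phi>(v := w)) y = w" using True \<open>x \<noteq> v\<close> by simp_all
      moreover have "E x y \<longleftrightarrow> E v x" using True sym by blast
      moreover have "dot3 (\<phi> x) w = dot3 w (\<phi> x)" by (rule dot3_comm)
      moreover have "cross3 (\<phi> x) w = 0 \<longleftrightarrow> cross3 w (\<phi> x) = 0" by (rule cross3_anti)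
      ultimately show ?thesis by simp
    next
      case False
      hence "y \<in> V'" using y by auto
      thus ?thesis using xV g xy EE \<open>x \<noteq> v\<close> False by (auto simp: goodrep_def)
    qed
  qed
  thus "dot3 ((\<phi>(v := w)) x) ((\<phi>(v := w)) y) = 0 \<longleftrightarrow> E x y"
       "cross3 ((\<phi>(v := w)) x) ((\<phi>(v := w)) y) \<noteq> 0" by blast+
qed

lemma forest_rep:
  assumes "finite V" "simple_graph V E" "acyclic_graph E"
  shows "\<exists>\<phi>. goodrep V E \<phi>"
  using assms
proof (induction V arbitrary: E rule: finite_psubset_induct)
  case (psubset V)
  show ?case
  proof (cases "V = {}")
    case True thus ?thesis by (auto simp: goodrep_def)
  next
    case False
    obtain v where v: "v \<in> V" "\<forall>x y. E v x \<longrightarrow> E v y \<longrightarrow> x = y"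
      using leaf_exists[OF psubset.prems False] by blast
    define V' where "V' = V - {v}"
    define E' where "E' x y \<longleftrightarrow> E x y \<and> x \<noteq> v \<and> y \<noteq> v" for x y
    have sg': "simple_graph V' E'" using psubset.prems(1)
      by (auto simp: simple_graph_def V'_def E'_def)
    have ac': "acyclic_graph E'"
      unfolding acyclic_graph_def
    proof
      assume "\<exists>cs. is_cycle E' cs"
      then obtain cs where cs: "is_cycle E' cs" by blast
      have "is_cycle E cs" using cs unfolding is_cycle_def E'_def by blast
      thus False using psubset.prems(2) unfolding acyclic_graph_def by blast
    qed
    have "V' \<subset> V" using v by (auto simp: V'_def)
    then obtain \<phi> where g: "goodrep V' E' \<phi>" using psubset.IH sg' ac' by blast
    have finV': "finite V'" using psubset.hyps by (simp add: V'_def)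
    have sym: "\<forall>x y. E x y \<longrightarrow> E y x" using psubset.prems(1) by (simp add: simple_graph_def)
    have EE: "\<forall>x\<in>V'. \<forall>y\<in>V'. E x y = E' x y" by (auto simp: V'_def E'_def)
    have VV: "V = insert v V'" using v by (auto simp: V'_def)
    have vn: "v \<notin> V'" by (simp add: V'_def)
    have EV: "E x y \<Longrightarrow> x \<in> V \<and> y \<in> V" for x y using psubset.prems(1) by (simp add: simple_graph_def)
    show ?thesis
    proof (cases "\<exists>p. E v p")
      case True
      then obtain p where p: "E v p" by blast
      have pV: "p \<in> V'" using p EV psubset.prems(1) by (auto simp: V'_def simple_graph_def)
      have a0: "\<phi> p \<noteq> 0" using g pV by (simp add: goodrep_def)
      have "\<forall>s\<in>\<phi> ` (V' - {p}). s \<noteq> 0 \<and> cross3 (\<phi> p) s \<noteq> 0" using g pV by (auto simp: goodrep_def)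
      then obtain w where w: "w \<noteq> 0" "dot3 w (\<phi> p) = 0" "cross3 w (\<phi> p) \<noteq> 0"
        "\<forall>s\<in>\<phi> ` (V' - {p}). dot3 w s \<noteq> 0 \<and> cross3 w s \<noteq> 0"
        using extend[of "\<phi> ` (V' - {p})" "\<phi> p"] finV' a0 by blast
      have "\<forall>x\<in>V'. (dot3 w (\<phi> x) = 0 \<longleftrightarrow> E v x) \<and> cross3 w (\<phi> x) \<noteq> 0"
      proof
        fix x assume x: "x \<in> V'"
        show "(dot3 w (\<phi> x) = 0 \<longleftrightarrow> E v x) \<and> cross3 w (\<phi> x) \<noteq> 0"
        proof (cases "x = p")
          case True thus ?thesis using w p by simp
        next
          case False
          hence "\<not> E v x" using v(2) p by blast
          thus ?thesis using w(4) x False by auto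
        qed
      qed
      from goodrep_ext[OF g vn w(1) this EE sym] have "goodrep V E (\<phi>(v := w))" using VV by simp
      thus ?thesis by blast
    next
      case False
      have "\<forall>s\<in>\<phi> ` V'. s \<noteq> 0" using g by (auto simp: goodrep_def)
      then obtain a where a: "a \<noteq> 0" "\<forall>s\<in>\<phi> ` V'. cross3 a s \<noteq> 0"
        using fict[of "\<phi> ` V'"] finV' by blast
      have "\<forall>s\<in>\<phi> ` V'. s \<noteq> 0 \<and> cross3 a s \<noteq> 0" using a \<open>\<forall>s\<in>\<phi> ` V'. s \<noteq> 0\<close> by blast
      then obtain w where w: "w \<noteq> 0" "\<forall>s\<in>\<phi> ` V'. dot3 w s \<noteq> 0 \<and> cross3 w s \<noteq> 0"
        using extend[of "\<phi> ` V'" a] finV' a(1) by blast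
      have "\<forall>x\<in>V'. (dot3 w (\<phi> x) = 0 \<longleftrightarrow> E v x) \<and> cross3 w (\<phi> x) \<noteq> 0"
        using w False by auto
      from goodrep_ext[OF g vn w(1) this EE sym] have "goodrep V E (\<phi>(v := w))" using VV by simp
      thus ?thesis by blast
    qed
  qed
qed



lemma kill2: "(w1::real)*t = 0 \<Longrightarrow> w2*t = 0 \<Longrightarrow> w1 \<noteq> 0 \<or> w2 \<noteq> 0 \<Longrightarrow> t = 0" by auto

lemma S1: fixes a1 a2 w1 w2 z1 z2 :: real
  assumes "w1 \<noteq> 0 \<or> w2 \<noteq> 0" "a1*w2 - a2*w1 = 0" "w1*z1 + w2*z2 = 0"
  shows "a1*z1 + a2*z2 = 0"
proof (rule kill2[OF _ _ assms(1)])
  show "w1*(a1*z1 + a2*z2) = 0" using assms(2,3) by algebra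
  show "w2*(a1*z1 + a2*z2) = 0" using assms(2,3) by algebra
qed

lemma S2: fixes a1 a2 w1 w2 z1 z2 :: real
  assumes "w1 \<noteq> 0 \<or> w2 \<noteq> 0" "a1*w1 + a2*w2 = 0" "w1*z1 + w2*z2 = 0"
  shows "a1*z2 - a2*z1 = 0"
proof (rule kill2[OF _ _ assms(1)])
  show "w1*(a1*z2 - a2*z1) = 0" using assms(2,3) by algebra
  show "w2*(a1*z2 - a2*z1) = 0" using assms(2,3) by algebra
qed

lemma L1: fixes a1 a2 x1 x2 y1 y2 :: real
  assumes "a1 \<noteq> 0 \<or> a2 \<noteq> 0" "a1*x2 - a2*x1 = 0" "a1*y1 + a2*y2 = 0"
  shows "x1*y1 + x2*y2 = 0"
proof (rule kill2[OF _ _ assms(1)])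
  show "a1*(x1*y1 + x2*y2) = 0" using assms(2,3) by algebra
  show "a2*(x1*y1 + x2*y2) = 0" using assms(2,3) by algebra
qed

lemma Tp: fixes a1 a2 x1 x2 y1 y2 :: real
  assumes "a1 \<noteq> 0 \<or> a2 \<noteq> 0" "a1*x2 - a2*x1 = 0" "a1*y2 - a2*y1 = 0"
  shows "x1*y2 - x2*y1 = 0"
proof (rule kill2[OF _ _ assms(1)])
  show "a1*(x1*y2 - x2*y1) = 0" using assms(2,3) by algebra
  show "a2*(x1*y2 - x2*y1) = 0" using assms(2,3) by algebra
qed

lemma Dj: fixes a1 a2 v1 v2 :: real
  assumes "a1 \<noteq> 0 \<or> a2 \<noteq> 0" "a1*v2 - a2*v1 = 0" "a1*v1 + a2*v2 = 0"
  shows "v1 = 0 \<and> v2 = 0"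
proof -
  have n: "a1*a1 + a2*a2 \<noteq> 0"
  proof
    assume h: "a1*a1 + a2*a2 = 0"
    have "a1*a1 \<ge> 0" "a2*a2 \<ge> 0" by simp_all
    hence "a1*a1 = 0" "a2*a2 = 0" using h by linarith+
    thus False using assms(1) by simp
  qed
  have "(a1*a1 + a2*a2)*v1 = 0" "(a1*a1 + a2*a2)*v2 = 0" using assms(2,3) by algebra+
  thus ?thesis using n by (metis no_zero_divisors)
qed

lemma L2: fixes a1 a2 x1 x2 y1 y2 :: real
  assumes "a1 \<noteq> 0 \<or> a2 \<noteq> 0" "x1 \<noteq> 0 \<or> x2 \<noteq> 0" "y1 \<noteq> 0 \<or> y2 \<noteq> 0"
    "a1*x2 - a2*x1 = 0" "a1*y2 - a2*y1 = 0"
  shows "x1*y1 + x2*y2 \<noteq> 0"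
proof
  assume "x1*y1 + x2*y2 = 0"
  from Dj[OF assms(2) Tp[OF assms(1,4,5)] this] assms(3) show False by simp
qed

lemma L3: fixes a1 a2 x1 x2 y1 y2 :: real
  assumes "a1 \<noteq> 0 \<or> a2 \<noteq> 0" "x1 \<noteq> 0 \<or> x2 \<noteq> 0" "y1 \<noteq> 0 \<or> y2 \<noteq> 0"
    "a1*x1 + a2*x2 = 0" "a1*y1 + a2*y2 = 0"
  shows "x1*y1 + x2*y2 \<noteq> 0"
proof -
  have "x1*a1 + x2*a2 = 0" using assms(4) by (simp add: mult.commute)
  from S2[OF assms(1) this assms(5)] have p: "x1*y2 - x2*y1 = 0" .
  show ?thesis
  proof
    assume "x1*y1 + x2*y2 = 0"
    from Dj[OF assms(2) p this] assms(3) show False by simp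
  qed
qed


lemma sum2: "(\<Sum>i<(2::nat). f i) = f 0 + (f 1 :: real)" by (simp add: numeral_2_eq_2)
lemma sum3: "(\<Sum>i<(3::nat). f i) = f 0 + f 1 + (f 2 :: real)" by (simp add: numeral_3_eq_3 numeral_2_eq_2)

lemma edge_exists:
  assumes "is_tree V E" "card V \<ge> 2"
  shows "\<exists>u w. E u w"
proof -
  have fin: "finite V" using assms(1) by (simp add: is_tree_def simple_graph_def)
  obtain u where u: "u \<in> V" using assms(2) by fastforce
  have "card (V - {u}) \<ge> 1" using assms(2) u fin by simp
  hence "V - {u} \<noteq> {}" by (metis card.empty not_one_le_zero)
  then obtain v where v: "v \<in> V" "v \<noteq> u" by blast
  have "E\<^sup>*\<^sup>* u v" using assms(1) u v by (simp add: is_tree_def connected_graph_def)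
  thus ?thesis using v(2) by (metis converse_rtranclpE)
qed

lemma no_rep_small:
  assumes "is_tree V E" "card V \<ge> 2" "ortho_rep V (complement V E) d \<phi>" "d \<le> 1"
  shows False
proof -
  obtain u w where e: "E u w" using edge_exists[OF assms(1,2)] by blast
  have sg: "simple_graph V E" using assms(1) by (simp add: is_tree_def)
  hence uw: "u \<in> V" "w \<in> V" "u \<noteq> w" using e by (auto simp: simple_graph_def)
  show False
  proof (cases "d = 0")
    case True thus False using assms(3) uw by (auto simp: ortho_rep_def)
  next
    case False
    hence d: "d = 1" using assms(4) by simp
    have "\<phi> u 0 \<noteq> 0" "\<phi> w 0 \<noteq> 0" using assms(3) uw d by (auto simp: ortho_rep_def)
    moreover have "(\<Sum>i<d. \<phi> u i * \<phi> w i) = 0" using assms(3) uw e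
      by (auto simp: ortho_rep_def complement_def)
    ultimately show False using d by simp
  qed
qed

lemma rep2_star:
  assumes tree: "is_tree V E" and card: "card V \<ge> 2" and rep: "ortho_rep V (complement V E) 2 \<phi>"
  shows "is_star V E"
proof -
  have sg: "simple_graph V E" using tree by (simp add: is_tree_def)
  have ac: "acyclic_graph E" using tree by (simp add: is_tree_def)
  have sym: "\<And>x y. E x y \<Longrightarrow> E y x" and EV: "\<And>x y. E x y \<Longrightarrow> x \<in> V \<and> y \<in> V"
    and irr: "\<And>x. \<not> E x x" using sg by (auto simp: simple_graph_def)
  define D where "D u v = \<phi> u 0 * \<phi> v 0 + \<phi> u 1 * \<phi> v 1" for u v
  define X where "X u v = \<phi> u 0 * \<phi> v 1 - \<phi> u 1 * \<phi> v 0" for u v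
  have nz: "\<phi> v 0 \<noteq> 0 \<or> \<phi> v 1 \<noteq> 0" if "v \<in> V" for v
  proof -
    have "\<exists>i<2. \<phi> v i \<noteq> 0" using rep that by (simp add: ortho_rep_def)
    then obtain i where "i < 2" and "\<phi> v i \<noteq> 0" by blast
    moreover from \<open>i < 2\<close> have "i = 0 \<or> i = 1" by auto
    ultimately show ?thesis by auto
  qed
  have charE: "E u v \<longleftrightarrow> D u v = 0" if "u \<in> V" "v \<in> V" for u v
  proof (cases "u = v")
    case True
    have "X u u = 0" by (simp add: X_def mult.commute)
    have "D u u \<noteq> 0"
    proof
      assume "D u u = 0"
      hence "\<phi> u 0 * \<phi> u 0 + \<phi> u 1 * \<phi> u 1 = 0" by (simp add: D_def)
      moreover have "\<phi> u 0 * \<phi> u 1 - \<phi> u 1 * \<phi> u 0 = 0" by simp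
      ultimately have "\<phi> u 0 = 0 \<and> \<phi> u 1 = 0" using Dj[OF nz[OF that(1)]] by blast
      thus False using nz[OF that(1)] by simp
    qed
    thus ?thesis using True irr by simp
  next
    case False
    have "(\<Sum>i<2. \<phi> u i * \<phi> v i) = 0 \<longleftrightarrow> \<not> complement V E u v"
      using rep[unfolded ortho_rep_def, THEN conjunct2, rule_format, OF that False] .
    hence "(D u v = 0) \<longleftrightarrow> \<not> complement V E u v" by (simp only: sum2 D_def)
    thus ?thesis using that False by (simp add: complement_def)
  qed
  obtain a b where ab: "E a b" using edge_exists[OF tree card] by blast
  have aV: "a \<in> V" and bV: "b \<in> V" using EV[OF ab] by auto
  have na: "\<phi> a 0 \<noteq> 0 \<or> \<phi> a 1 \<noteq> 0" using nz aV by blast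
  define A where "A = {v\<in>V. X a v = 0}"
  define B where "B = {v\<in>V. D a v = 0}"
  have reach: "v \<in> V \<and> (X a v = 0 \<or> D a v = 0)" if "E\<^sup>*\<^sup>* a v" for v
    using that
  proof (induction rule: rtranclp_induct)
    case base thus ?case using aV by (simp add: X_def algebra_simps)
  next
    case (step y z)
    have zV: "z \<in> V" using EV[OF step.hyps(2)] by simp
    have yV: "y \<in> V" using step.IH by simp
    have Dyz: "D y z = 0" using charE[OF yV zV] step.hyps(2) by simp
    show ?case
    proof (cases "X a y = 0")
      case True
      have "D a z = 0" unfolding D_def
        by (rule S1[OF nz[OF yV]]) (use True Dyz in \<open>simp_all add: X_def D_def\<close>)
      thus ?thesis using zV by simp
    next
      case False
      hence Day: "D a y = 0" using step.IH by simp
      have "X a z = 0" unfolding X_def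
        by (rule S2[OF nz[OF yV]]) (use Dyz Day in \<open>simp_all add: X_def D_def\<close>)
      thus ?thesis using zV by simp
    qed
  qed
  have AB: "\<forall>v\<in>V. (v \<in> A \<or> v \<in> B) \<and> \<not> (v \<in> A \<and> v \<in> B)"
  proof
    fix v assume v: "v \<in> V"
    have "E\<^sup>*\<^sup>* a v" using tree aV v by (simp add: is_tree_def connected_graph_def)
    hence "v \<in> A \<or> v \<in> B" using reach by (auto simp: A_def B_def)
    moreover have "\<not> (v \<in> A \<and> v \<in> B)"
    proof
      assume "v \<in> A \<and> v \<in> B"
      hence h: "X a v = 0" "D a v = 0" by (auto simp: A_def B_def)
      have "\<phi> v 0 = 0 \<and> \<phi> v 1 = 0"
        by (rule Dj[OF na]) (use h in \<open>simp_all add: X_def D_def\<close>)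
      thus False using nz[OF v] by simp
    qed
    ultimately show "(v \<in> A \<or> v \<in> B) \<and> \<not> (v \<in> A \<and> v \<in> B)" by blast
  qed
  have echar: "E u v \<longleftrightarrow> (u \<in> A \<and> v \<in> B) \<or> (u \<in> B \<and> v \<in> A)" if u: "u \<in> V" and v: "v \<in> V" for u v
  proof -
    have "D u v = 0 \<longleftrightarrow> (u \<in> A \<and> v \<in> B) \<or> (u \<in> B \<and> v \<in> A)"
    proof (cases "u \<in> A")
      case True
      hence uA: "X a u = 0" by (simp add: A_def)
      show ?thesis
      proof (cases "v \<in> A")
        case True
        hence xav: "X a v = 0" by (simp add: A_def)
        have "D u v \<noteq> 0" unfolding D_def
          by (rule L2[OF na nz[OF u] nz[OF v]]) (use uA xav in \<open>simp_all add: X_def\<close>)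
        moreover have "u \<notin> B" "v \<notin> B" using AB u v True \<open>u \<in> A\<close> by blast+
        ultimately show ?thesis by blast
      next
        case False
        hence "v \<in> B" using AB v by blast
        hence dav: "D a v = 0" by (simp add: B_def)
        have "D u v = 0" unfolding D_def
          by (rule L1[OF na]) (use uA dav in \<open>simp_all add: X_def D_def\<close>)
        thus ?thesis using \<open>v \<in> B\<close> \<open>u \<in> A\<close> by blast
      qed
    next
      case False
      hence uB: "u \<in> B" using AB u by blast
      hence uB': "D a u = 0" by (simp add: B_def)
      show ?thesis
      proof (cases "v \<in> A")
        case True
        hence xav: "X a v = 0" by (simp add: A_def)
        have "D v u = 0" unfolding D_def
          by (rule L1[OF na]) (use uB' xav in \<open>simp_all add: X_def D_def\<close>)
        hence "D u v = 0" by (simp add: D_def algebra_simps)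
        thus ?thesis using True uB by blast
      next
        case False
        hence "v \<in> B" using AB v by blast
        hence dav: "D a v = 0" by (simp add: B_def)
        have "D u v \<noteq> 0" unfolding D_def
          by (rule L3[OF na nz[OF u] nz[OF v]]) (use uB' dav in \<open>simp_all add: D_def\<close>)
        thus ?thesis using False \<open>u \<notin> A\<close> by blast
      qed
    qed
    thus ?thesis using charE[OF u v] by simp
  qed
  have aA: "a \<in> A" using aV by (simp add: A_def X_def algebra_simps)
  have bB: "b \<in> B" using charE[OF aV bV] ab by (simp add: B_def bV)
  show ?thesis
  proof (cases "A = {a}")
    case True
    have "\<forall>u\<in>V. \<forall>v\<in>V. E u v \<longleftrightarrow> (u \<noteq> v \<and> (u = a \<or> v = a))"
    proof (intro ballI)
      fix u v assume u: "u \<in> V" and v: "v \<in> V"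
      have "u \<in> A \<longleftrightarrow> u = a" "v \<in> A \<longleftrightarrow> v = a" using True by auto
      moreover have "u \<in> B \<longleftrightarrow> u \<noteq> a" "v \<in> B \<longleftrightarrow> v \<noteq> a" using AB[rule_format, OF u] AB[rule_format, OF v] True by blast+
      ultimately show "E u v \<longleftrightarrow> (u \<noteq> v \<and> (u = a \<or> v = a))" using echar[OF u v] by auto
    qed
    thus ?thesis using aV by (auto simp: is_star_def)
  next
    case False
    then obtain a2 where a2: "a2 \<in> A" "a2 \<noteq> a" using aA by blast
    show ?thesis
    proof (cases "B = {b}")
      case True
      have "\<forall>u\<in>V. \<forall>v\<in>V. E u v \<longleftrightarrow> (u \<noteq> v \<and> (u = b \<or> v = b))"
      proof (intro ballI)
        fix u v assume u: "u \<in> V" and v: "v \<in> V"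
        have "u \<in> B \<longleftrightarrow> u = b" "v \<in> B \<longleftrightarrow> v = b" using True by auto
        moreover have "u \<in> A \<longleftrightarrow> u \<noteq> b" "v \<in> A \<longleftrightarrow> v \<noteq> b" using AB[rule_format, OF u] AB[rule_format, OF v] True by blast+
        ultimately show "E u v \<longleftrightarrow> (u \<noteq> v \<and> (u = b \<or> v = b))" using echar[OF u v] by auto
      qed
      thus ?thesis using bV by (auto simp: is_star_def)
    next
      case False
      then obtain b2 where b2: "b2 \<in> B" "b2 \<noteq> b" using bB by blast
      have inV: "a2 \<in> V" "b2 \<in> V" using a2 b2 by (auto simp: A_def B_def)
      have dis: "\<forall>x\<in>A. \<forall>y\<in>B. x \<noteq> y" using AB by (auto simp: A_def)
      have e1: "E a b" "E b a2" "E a2 b2" "E b2 a"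
        using echar[OF aV bV] echar[OF bV inV(1)] echar[OF inV(1) inV(2)] echar[OF inV(2) aV]
          aA bB a2 b2 by blast+
      have "is_cycle E [a, b, a2, b2]"
        unfolding is_cycle_def
      proof (intro conjI allI impI)
        show "distinct [a, b, a2, b2]" using dis aA bB a2 b2 by auto
        fix i assume "Suc i < length [a, b, a2, b2]"
        hence "i = 0 \<or> i = 1 \<or> i = 2" by auto
        thus "E ([a, b, a2, b2] ! i) ([a, b, a2, b2] ! Suc i)" using e1 by auto
      qed (use e1 in auto)
      thus ?thesis using ac by (auto simp: acyclic_graph_def)
    qed
  qed
qed

lemma star_rep:
  assumes "is_star V E"
  shows "\<exists>\<phi>. ortho_rep V (complement V E) 2 \<phi>"
proof -
  obtain c where c: "c \<in> V" "\<forall>u\<in>V. \<forall>v\<in>V. E u v \<longleftrightarrow> (u \<noteq> v \<and> (u = c \<or> v = c))"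
    using assms by (auto simp: is_star_def)
  define \<phi> where "\<phi> v i = (if v = c then (if i = 0 then 1 else 0) else (if i = 1 then 1 else (0::real)))"
    for v and i :: nat
  have "ortho_rep V (complement V E) 2 \<phi>"
    unfolding ortho_rep_def
  proof (intro conjI ballI impI)
    fix v assume "v \<in> V"
    show "\<exists>i<2. \<phi> v i \<noteq> 0"
    proof (cases "v = c")
      case True thus ?thesis by (intro exI[of _ 0]) (simp add: \<phi>_def)
    next
      case False thus ?thesis by (intro exI[of _ 1]) (simp add: \<phi>_def)
    qed
  next
    fix u v assume u: "u \<in> V" and v: "v \<in> V" and uv: "u \<noteq> v"
    have cm: "complement V E u v \<longleftrightarrow> \<not> (u = c \<or> v = c)" using c(2) u v uv
      by (simp add: complement_def)
    show "((\<Sum>i<2. \<phi> u i * \<phi> v i) = 0) = (\<not> complement V E u v)"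
      unfolding sum2 cm using uv by (auto simp: \<phi>_def)
  qed
  thus ?thesis by blast
qed

lemma forest_ortho:
  assumes "is_tree V E"
  shows "\<exists>\<phi>. ortho_rep V (complement V E) 3 \<phi>"
proof -
  have fin: "finite V" and sg: "simple_graph V E" and ac: "acyclic_graph E"
    using assms by (auto simp: is_tree_def simple_graph_def)
  obtain \<phi> where g: "goodrep V E \<phi>" using forest_rep[OF fin sg ac] by blast
  define \<psi> where "\<psi> v i = (if i = 0 then fst (\<phi> v) else if i = 1 then fst (snd (\<phi> v)) else snd (snd (\<phi> v)))"
    for v and i :: nat
  have "ortho_rep V (complement V E) 3 \<psi>"
    unfolding ortho_rep_def
  proof (intro conjI ballI impI)
    fix v assume v: "v \<in> V"
    hence "\<phi> v \<noteq> 0" using g by (simp add: goodrep_def)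
    hence "fst (\<phi> v) \<noteq> 0 \<or> fst (snd (\<phi> v)) \<noteq> 0 \<or> snd (snd (\<phi> v)) \<noteq> 0"
      by (cases "\<phi> v") (auto simp: zero_prod_def)
    thus "\<exists>i<3. \<psi> v i \<noteq> 0"
    proof (elim disjE)
      assume "fst (\<phi> v) \<noteq> 0" thus ?thesis by (intro exI[of _ 0]) (simp add: \<psi>_def)
    next
      assume "fst (snd (\<phi> v)) \<noteq> 0" thus ?thesis by (intro exI[of _ 1]) (simp add: \<psi>_def)
    next
      assume "snd (snd (\<phi> v)) \<noteq> 0" thus ?thesis by (intro exI[of _ 2]) (simp add: \<psi>_def)
    qed
  next
    fix u v assume u: "u \<in> V" and v: "v \<in> V" and uv: "u \<noteq> v"
    have "(\<Sum>i<3. \<psi> u i * \<psi> v i) = dot3 (\<phi> u) (\<phi> v)"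
      by (simp add: sum3 \<psi>_def dot3_def)
    moreover have "dot3 (\<phi> u) (\<phi> v) = 0 \<longleftrightarrow> E u v" using g u v uv by (simp add: goodrep_def)
    moreover have "complement V E u v \<longleftrightarrow> \<not> E u v" using u v uv by (simp add: complement_def)
    ultimately show "((\<Sum>i<3. \<psi> u i * \<psi> v i) = 0) = (\<not> complement V E u v)" by simp
  qed
  thus ?thesis by blast
qed

theorem proposition4p1:
  fixes V :: "'a set" and E :: "'a \<Rightarrow> 'a \<Rightarrow> bool"
  assumes "is_tree V E" and "card V \<ge> 2"
  shows "mvr V (complement V E) = (if is_star V E then 2 else 3)"
proof (cases "is_star V E")
  case True
  have "(LEAST d. \<exists>\<phi>. ortho_rep V (complement V E) d \<phi>) = 2"
  proof (rule Least_equality)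
    show "\<exists>\<phi>. ortho_rep V (complement V E) 2 \<phi>" using star_rep[OF True] .
    fix d assume "\<exists>\<phi>. ortho_rep V (complement V E) d \<phi>"
    then obtain \<phi> where r: "ortho_rep V (complement V E) d \<phi>" by blast
    show "2 \<le> d"
    proof (rule ccontr)
      assume "\<not> 2 \<le> d"
      hence "d \<le> 1" by simp
      thus False using no_rep_small[OF assms r] by simp
    qed
  qed
  thus ?thesis using True by (simp add: mvr_def)
next
  case False
  have "(LEAST d. \<exists>\<phi>. ortho_rep V (complement V E) d \<phi>) = 3"
  proof (rule Least_equality)
    show "\<exists>\<phi>. ortho_rep V (complement V E) 3 \<phi>" using forest_ortho[OF assms(1)] .
    fix d assume "\<exists>\<phi>. ortho_rep V (complement V E) d \<phi>"
    then obtain \<phi> where r: "ortho_rep V (complement V E) d \<phi>" by blast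
    show "3 \<le> d"
    proof (rule ccontr)
      assume "\<not> 3 \<le> d"
      hence "d \<le> 1 \<or> d = 2" by auto
      thus False
      proof
        assume "d \<le> 1" thus False using no_rep_small[OF assms r] by simp
      next
        assume "d = 2" thus False using rep2_star[OF assms] r False by simp
      qed
    qed
  qed
  thus ?thesis using False by (simp add: mvr_def)
qed


end
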